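(* Let $G$ be a simple undirected graph on $\{1,\dots,n\}$ with adjacency $g_{ij}$ and degrees $d_i$, and let the exposure of unit $i$ be $e_i=\sum_j g_{ij}z_j\in\{0,1,\dots,d_i\}$. Suppose the potential outcomes are $Y_i(z_i,e_i)=\alpha_i+\beta_iz_i+B_i(e_i)$ with $B_i(0)=0$. Under a completely randomized design with $1\le n_t\le n-1$ treated units, and under a restricted Bernoulli design with $0<p<1$, the bias of $$\hat\beta_{naive}=\frac{\sum_i Y_i^{obs}Z_i}{\sum_i Z_i}-\frac{\sum_i Y_i^{obs}(1-Z_i)}{\sum_i(1-Z_i)}$$ for $\mathrm{DTE}=\frac1n\sum_i(Y_i(1,0)-Y_i(0,0))$ is $$\mathbb E[\hat\beta_{naive}]-\mathrm{DTE}=\sum_i\sum_{e\ne0}B_i(e)\big[\alpha_i(1,e)-\alpha_i(0,e)\big],$$ where $\alpha_i(z,e)=\mathbb E\!\left[\frac{I(Z_i=z,E_i=e)}{\sum_jI(Z_j=z)}\right]$.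
   Context: Completely randomized design: $\mathbf Z$ is uniform over vectors in $\{0,1\}^n$ with exactly $n_t$ ones. Restricted Bernoulli design with parameter $p$: $P(\mathbf Z=\mathbf z)=p^{|\mathbf z|}(1-p)^{n-|\mathbf z|}/(1-p^n-(1-p)^n)$ for $0<|\mathbf z|<n$ and $0$ otherwise, where $|\mathbf z|=\sum_i z_i$. $E_i=\sum_j g_{ij}Z_j$ and $Y_i^{obs}=Y_i(Z_i,E_i)$. *)

theory Defs
  imports Complex_Main
begin

text \<open>Units are indexed by 0,...,n-1. An assignment is represented by the set S of
treated units (S a subset of {..<n}), so Z_i = 1 iff i is in S.
A design is a probability weight function on assignments; expectations are finite sums
over all subsets of {..<n}.\<close>

definition Zind :: "nat set \<Rightarrow> nat \<Rightarrow> real" where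
  "Zind S i = (if i \<in> S then 1 else 0)"

definition crd_prob :: "nat \<Rightarrow> nat \<Rightarrow> nat set \<Rightarrow> real" where
  "crd_prob n nt S = (if S \<subseteq> {..<n} \<and> card S = nt then 1 / real (n choose nt) else 0)"

definition rbd_prob :: "nat \<Rightarrow> real \<Rightarrow> nat set \<Rightarrow> real" where
  "rbd_prob n p S = (if S \<subseteq> {..<n} \<and> 0 < card S \<and> card S < n
      then p ^ card S * (1 - p) ^ (n - card S) / (1 - p ^ n - (1 - p) ^ n) else 0)"

definition expect :: "nat \<Rightarrow> (nat set \<Rightarrow> real) \<Rightarrow> (nat set \<Rightarrow> real) \<Rightarrow> real" where
  "expect n P f = (\<Sum>S\<in>Pow {..<n}. P S * f S)"

definition degree :: "(nat \<Rightarrow> nat \<Rightarrow> bool) \<Rightarrow> nat \<Rightarrow> nat \<Rightarrow> nat" where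
  "degree g n i = card {j\<in>{..<n}. g i j}"

definition exposure :: "(nat \<Rightarrow> nat \<Rightarrow> bool) \<Rightarrow> nat \<Rightarrow> nat set \<Rightarrow> nat \<Rightarrow> nat" where
  "exposure g n S i = card {j\<in>{..<n}. g i j \<and> j \<in> S}"

definition Ypot :: "(nat \<Rightarrow> real) \<Rightarrow> (nat \<Rightarrow> real) \<Rightarrow> (nat \<Rightarrow> nat \<Rightarrow> real)
    \<Rightarrow> nat \<Rightarrow> real \<Rightarrow> nat \<Rightarrow> real" where
  "Ypot a b B i z e = a i + b i * z + B i e"

definition Yobs :: "nat \<Rightarrow> (nat \<Rightarrow> nat \<Rightarrow> bool) \<Rightarrow> (nat \<Rightarrow> real) \<Rightarrow> (nat \<Rightarrow> real)
    \<Rightarrow> (nat \<Rightarrow> nat \<Rightarrow> real) \<Rightarrow> nat set \<Rightarrow> nat \<Rightarrow> real" where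
  "Yobs n g a b B S i = Ypot a b B i (Zind S i) (exposure g n S i)"

definition beta_naive :: "nat \<Rightarrow> (nat \<Rightarrow> nat \<Rightarrow> bool) \<Rightarrow> (nat \<Rightarrow> real) \<Rightarrow> (nat \<Rightarrow> real)
    \<Rightarrow> (nat \<Rightarrow> nat \<Rightarrow> real) \<Rightarrow> nat set \<Rightarrow> real" where
  "beta_naive n g a b B S =
     (\<Sum>i<n. Yobs n g a b B S i * Zind S i) / (\<Sum>i<n. Zind S i)
   - (\<Sum>i<n. Yobs n g a b B S i * (1 - Zind S i)) / (\<Sum>i<n. (1 - Zind S i))"

definition DTE :: "nat \<Rightarrow> (nat \<Rightarrow> real) \<Rightarrow> (nat \<Rightarrow> real) \<Rightarrow> (nat \<Rightarrow> nat \<Rightarrow> real) \<Rightarrow> real" where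
  "DTE n a b B = (1 / real n) * (\<Sum>i<n. Ypot a b B i 1 0 - Ypot a b B i 0 0)"

definition alpha_w :: "nat \<Rightarrow> (nat \<Rightarrow> nat \<Rightarrow> bool) \<Rightarrow> (nat set \<Rightarrow> real)
    \<Rightarrow> nat \<Rightarrow> real \<Rightarrow> nat \<Rightarrow> real" where
  "alpha_w n g P i z e = expect n P (\<lambda>S.
      (if Zind S i = z \<and> exposure g n S i = e then 1 else 0)
      / (\<Sum>j<n. if Zind S j = z then 1 else 0))"

definition bias_formula :: "nat \<Rightarrow> (nat \<Rightarrow> nat \<Rightarrow> bool) \<Rightarrow> (nat set \<Rightarrow> real)
    \<Rightarrow> (nat \<Rightarrow> nat \<Rightarrow> real) \<Rightarrow> real" where
  "bias_formula n g P B = (\<Sum>i<n. \<Sum>e\<in>{1..degree g n i}.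
      B i e * (alpha_w n g P i 1 e - alpha_w n g P i 0 e))"

end

theory Submission
  imports Defs
begin

definition sw :: "nat \<Rightarrow> nat \<Rightarrow> nat \<Rightarrow> nat" where
  "sw i j k = (if k = i then j else if k = j then i else k)"

lemma sw_sw[simp]: "sw i j (sw i j k) = k" by (simp add: sw_def)
lemma inj_sw: "inj (sw i j)" by (metis injI sw_sw)

lemma card_sw[simp]: "card (sw i j ` S) = card S"
  using inj_sw by (simp add: card_image inj_on_def)

lemma Nt_card: "S \<subseteq> {..<n} \<Longrightarrow> (\<Sum>k<n. Zind S k) = real (card S)"
proof -
  assume S: "S \<subseteq> {..<n}"
  have "(\<Sum>k<n. Zind S k) = (\<Sum>k\<in>{..<n}. if k \<in> S then 1 else 0)" by (simp add: Zind_def)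
  also have "\<dots> = real (card ({..<n} \<inter> S))" by (simp add: sum.If_cases)
  also have "{..<n} \<inter> S = S" using S by blast
  finally show ?thesis .
qed

lemma Nc_card: "S \<subseteq> {..<n} \<Longrightarrow> (\<Sum>k<n. 1 - Zind S k) = real n - real (card S)"
  by (simp add: sum_subtractf Nt_card)

definition symd :: "nat \<Rightarrow> (nat set \<Rightarrow> real) \<Rightarrow> bool" where
  "symd n P = (\<forall>S. S \<subseteq> {..<n} \<longrightarrow> (\<forall>i<n. \<forall>j<n. P (sw i j ` S) = P S))"

lemma swap_sum:
  assumes "i < n" "j < n"
  shows "(\<Sum>S\<in>Pow {..<n}. F S) = (\<Sum>S\<in>Pow {..<n}. F (sw i j ` S))"
proof -
  have bij: "bij_betw (\<lambda>S. sw i j ` S) (Pow {..<n}) (Pow {..<n})"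
  proof (rule bij_betw_byWitness[where f' = "\<lambda>S. sw i j ` S"])
    show "\<forall>a\<in>Pow {..<n}. sw i j ` sw i j ` a = a" by (simp add: image_image)
    show "\<forall>a\<in>Pow {..<n}. sw i j ` sw i j ` a = a" by (simp add: image_image)
    show "(\<lambda>S. sw i j ` S) ` Pow {..<n} \<subseteq> Pow {..<n}" using assms by (auto simp: sw_def)
    show "(\<lambda>S. sw i j ` S) ` Pow {..<n} \<subseteq> Pow {..<n}" using assms by (auto simp: sw_def)
  qed
  show ?thesis using sum.reindex_bij_betw[OF bij, of F] by simp
qed

lemma Zind_sw: "Zind (sw i j ` S) i = Zind S j"
proof -
  have "i \<in> sw i j ` S \<longleftrightarrow> j \<in> S"
    by (metis imageE image_eqI sw_def sw_sw)
  then show ?thesis by (simp add: Zind_def)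
qed

lemma Zind_sw2: "Zind (sw i j ` S) j = Zind S i"
proof -
  have "j \<in> sw i j ` S \<longleftrightarrow> i \<in> S"
    by (metis imageE image_eqI sw_def sw_sw)
  then show ?thesis by (simp add: Zind_def)
qed

lemma ET:
  assumes sd: "symd n P" and tot: "sum P (Pow {..<n}) = 1"
    and z: "\<And>S. S \<subseteq> {..<n} \<Longrightarrow> card S = 0 \<Longrightarrow> P S = 0"
    and i: "i < n"
  shows "expect n P (\<lambda>S. Zind S i / real (card S)) = 1 / real n"
proof -
  have eq: "expect n P (\<lambda>S. Zind S j / real (card S)) = expect n P (\<lambda>S. Zind S i / real (card S))"
    if j: "j < n" for j
  unfolding expect_def
    apply (subst swap_sum[OF i j])
    apply (rule sum.cong[OF refl])
    using sd i j by (simp add: symd_def Zind_sw2)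
  have "(\<Sum>j<n. expect n P (\<lambda>S. Zind S j / real (card S))) = expect n P (\<lambda>S. (\<Sum>j<n. Zind S j) / real (card S))"
    unfolding expect_def sum_divide_distrib sum_distrib_left by (rule sum.swap)
  also have "\<dots> = sum P (Pow {..<n})"
    unfolding expect_def
    by (rule sum.cong[OF refl]) (auto simp: Nt_card z)
  finally have "(\<Sum>j<n. expect n P (\<lambda>S. Zind S i / real (card S))) = 1"
    using eq tot by (metis (no_types, lifting) lessThan_iff sum.cong)
  then have "real n * expect n P (\<lambda>S. Zind S i / real (card S)) = 1" by simp
  then show ?thesis using i by (simp add: field_simps)
qed

lemma EC:
  assumes sd: "symd n P" and tot: "sum P (Pow {..<n}) = 1"
    and z: "\<And>S. S \<subseteq> {..<n} \<Longrightarrow> card S = n \<Longrightarrow> P S = 0"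
    and i: "i < n"
  shows "expect n P (\<lambda>S. (1 - Zind S i) / (real n - real (card S))) = 1 / real n"
proof -
  have eq: "expect n P (\<lambda>S. (1 - Zind S j) / (real n - real (card S))) = expect n P (\<lambda>S. (1 - Zind S i) / (real n - real (card S)))"
    if j: "j < n" for j
  unfolding expect_def
    apply (subst swap_sum[OF i j])
    apply (rule sum.cong[OF refl])
    using sd i j by (simp add: symd_def Zind_sw2)
  have "(\<Sum>j<n. expect n P (\<lambda>S. (1 - Zind S j) / (real n - real (card S)))) = expect n P (\<lambda>S. (\<Sum>j<n. 1 - Zind S j) / (real n - real (card S)))"
    unfolding expect_def sum_divide_distrib sum_distrib_left by (rule sum.swap)
  also have "\<dots> = sum P (Pow {..<n})"
    unfolding expect_def
    by (rule sum.cong[OF refl]) (auto simp: Nc_card z)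
  finally have "(\<Sum>j<n. expect n P (\<lambda>S. (1 - Zind S i) / (real n - real (card S)))) = 1"
    using eq tot by (metis (no_types, lifting) lessThan_iff sum.cong)
  then have "real n * expect n P (\<lambda>S. (1 - Zind S i) / (real n - real (card S))) = 1" by simp
  then show ?thesis using i by (simp add: field_simps)
qed

lemma expect_add: "expect n P (\<lambda>S. f S + h S) = expect n P f + expect n P h"
  unfolding expect_def by (simp add: distrib_left sum.distrib)
lemma expect_diff: "expect n P (\<lambda>S. f S - h S) = expect n P f - expect n P h"
  unfolding expect_def by (simp add: right_diff_distrib sum_subtractf)
lemma expect_cmult: "expect n P (\<lambda>S. c * f S) = c * expect n P f"
  unfolding expect_def by (simp add: sum_distrib_left mult_ac)
lemma expect_sum: "expect n P (\<lambda>S. \<Sum>i\<in>I. f i S) = (\<Sum>i\<in>I. expect n P (f i))"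
  unfolding expect_def sum_distrib_left by (rule sum.swap)

lemma exposure_le: "exposure g n S i \<le> degree g n i"
  unfolding exposure_def degree_def by (rule card_mono) auto

lemma beta_pw:
  assumes S: "S \<subseteq> {..<n}" and B0: "\<And>i. i < n \<Longrightarrow> B i 0 = 0"
  shows "beta_naive n g a b B S = (\<Sum>i<n. a i * (Zind S i / real (card S) - (1 - Zind S i) / (real n - real (card S)))
     + b i * (Zind S i / real (card S))
     + (\<Sum>e\<in>{1..degree g n i}. B i e *
        ((if Zind S i = 1 \<and> exposure g n S i = e then 1 else 0) / (\<Sum>j<n. if Zind S j = 1 then 1 else 0)
       - (if Zind S i = 0 \<and> exposure g n S i = e then 1 else 0) / (\<Sum>j<n. if Zind S j = 0 then 1 else 0))))"
proof -
  define c where "c = real (card S)"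
  define c' where "c' = real n - real (card S)"
  have d1: "(\<Sum>j<n. if Zind S j = 1 then 1 else 0) = c"
    unfolding c_def Nt_card[OF S, symmetric] by (rule sum.cong) (auto simp: Zind_def)
  have d0: "(\<Sum>j<n. if Zind S j = 0 then 1 else (0::real)) = c'"
    unfolding c'_def Nc_card[OF S, symmetric] by (rule sum.cong) (auto simp: Zind_def)
  have inner: "(\<Sum>e\<in>{1..degree g n i}. B i e *
        ((if Zind S i = 1 \<and> exposure g n S i = e then 1 else 0) / c
       - (if Zind S i = 0 \<and> exposure g n S i = e then 1 else 0) / c'))
      = B i (exposure g n S i) * (Zind S i / c - (1 - Zind S i) / c')" if i: "i < n" for i
  proof -
    have "(\<Sum>e\<in>{1..degree g n i}. B i e *
        ((if Zind S i = 1 \<and> exposure g n S i = e then 1 else 0) / c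
       - (if Zind S i = 0 \<and> exposure g n S i = e then 1 else 0) / c'))
      = (\<Sum>e\<in>{1..degree g n i}. if exposure g n S i = e then B i e * (Zind S i / c - (1 - Zind S i) / c') else 0)"
      by (rule sum.cong) (auto simp: Zind_def)
    also have "\<dots> = (if exposure g n S i \<in> {1..degree g n i} then B i (exposure g n S i) * (Zind S i / c - (1 - Zind S i) / c') else 0)"
      by (simp only: sum.delta' finite_atLeastAtMost)
    also have "\<dots> = B i (exposure g n S i) * (Zind S i / c - (1 - Zind S i) / c')"
      using exposure_le[of g n S i] B0[OF i] by (cases "exposure g n S i = 0") auto
    finally show ?thesis .
  qed
  have "beta_naive n g a b B S = (\<Sum>i<n. Yobs n g a b B S i * Zind S i / c - Yobs n g a b B S i * (1 - Zind S i) / c')"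
    unfolding beta_naive_def Nt_card[OF S] Nc_card[OF S] c_def c'_def
    by (simp add: sum_divide_distrib sum_subtractf)
  also have "\<dots> = (\<Sum>i<n. a i * (Zind S i / c - (1 - Zind S i) / c') + b i * (Zind S i / c)
     + B i (exposure g n S i) * (Zind S i / c - (1 - Zind S i) / c'))"
    by (rule sum.cong) (auto simp: Yobs_def Ypot_def Zind_def add_divide_distrib)
  also have "\<dots> = (\<Sum>i<n. a i * (Zind S i / c - (1 - Zind S i) / c') + b i * (Zind S i / c)
     + (\<Sum>e\<in>{1..degree g n i}. B i e *
        ((if Zind S i = 1 \<and> exposure g n S i = e then 1 else 0) / c
       - (if Zind S i = 0 \<and> exposure g n S i = e then 1 else 0) / c')))"
    by (rule sum.cong[OF refl]) (use inner in auto)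
  finally show ?thesis unfolding d1 d0 c_def c'_def .
qed


lemma sw_sub: "i < n \<Longrightarrow> j < n \<Longrightarrow> S \<subseteq> {..<n} \<Longrightarrow> sw i j ` S \<subseteq> {..<n}"
  by (auto simp: sw_def)

lemma symd_crd: "symd n (crd_prob n nt)"
  unfolding symd_def crd_prob_def using sw_sub by simp

lemma symd_rbd: "symd n (rbd_prob n p)"
  unfolding symd_def rbd_prob_def using sw_sub by simp

lemma crd_tot: assumes "nt \<le> n" shows "sum (crd_prob n nt) (Pow {..<n}) = 1"
proof -
  have "sum (crd_prob n nt) (Pow {..<n}) = (\<Sum>S\<in>Pow {..<n}. if card S = nt then 1 / real (n choose nt) else 0)"
    by (rule sum.cong) (auto simp: crd_prob_def)
  also have "\<dots> = (\<Sum>S\<in>{S\<in>Pow {..<n}. card S = nt}. 1 / real (n choose nt))"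
    by (rule sum.inter_filter[symmetric]) simp
  also have "{S\<in>Pow {..<n}. card S = nt} = {S. S \<subseteq> {..<n} \<and> card S = nt}" by auto
  finally have eq: "sum (crd_prob n nt) (Pow {..<n}) = (\<Sum>S\<in>{S. S \<subseteq> {..<n} \<and> card S = nt}. 1 / real (n choose nt))" .
  have "card {S. S \<subseteq> {..<n} \<and> card S = nt} = n choose nt" using n_subsets[of "{..<n}" nt] by simp
  then show ?thesis unfolding eq using assms by simp
qed

lemma full_binom:
  "(\<Sum>S\<in>Pow {..<n}. (p::real) ^ card S * (1 - p) ^ (n - card S)) = 1"
proof -
  have "(\<Prod>x\<in>{..<n}. p + (1 - p)) = (\<Sum>X\<in>Pow {..<n}. (\<Prod>x\<in>X. p) * (\<Prod>x\<in>{..<n}-X. 1 - p))"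
    by (rule prod_add) simp
  also have "\<dots> = (\<Sum>S\<in>Pow {..<n}. p ^ card S * (1 - p) ^ (n - card S))"
    by (rule sum.cong[OF refl]) (auto simp: card_Diff_subset finite_subset)
  finally show ?thesis by simp
qed

lemma rbd_tot: assumes p: "0 < p" "p < 1" and n: "2 \<le> n"
  shows "sum (rbd_prob n p) (Pow {..<n}) = 1"
proof -
  define f where "f (S::nat set) = p ^ card S * (1 - p) ^ (n - card S)" for S
  define D where "D = 1 - p ^ n - (1 - p) ^ n"
  let ?c = "\<lambda>S::nat set. 0 < card S \<and> card S < n"
  have "p ^ n < p ^ 1" using p n by (intro power_strict_decreasing) auto
  moreover have "(1 - p) ^ n < (1 - p) ^ 1" using p n by (intro power_strict_decreasing) auto
  ultimately have Dpos: "D > 0" unfolding D_def by simp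
  have "sum (rbd_prob n p) (Pow {..<n}) = (\<Sum>S\<in>Pow {..<n}. if ?c S then f S / D else 0)"
    by (rule sum.cong) (auto simp: rbd_prob_def f_def D_def)
  also have "\<dots> = (\<Sum>S\<in>Pow {..<n}. if ?c S then f S else 0) / D"
    unfolding sum_divide_distrib by (rule sum.cong) auto
  also have "(\<Sum>S\<in>Pow {..<n}. if ?c S then f S else 0) = D"
  proof -
    have split: "(\<Sum>S\<in>Pow {..<n}. f S) = (\<Sum>S\<in>Pow {..<n}. if ?c S then f S else 0) + (\<Sum>S\<in>Pow {..<n}. if \<not> ?c S then f S else 0)"
      by (simp add: sum.distrib[symmetric]) (rule sum.cong; auto)
    have "(\<Sum>S\<in>Pow {..<n}. if \<not> ?c S then f S else 0) = sum f {S\<in>Pow {..<n}. \<not> ?c S}"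
      by (rule sum.inter_filter[symmetric]) simp
    also have "{S\<in>Pow {..<n}. \<not> ?c S} = {{}, {..<n}}"
    proof (rule set_eqI, rule iffI)
      fix S assume "S \<in> {S\<in>Pow {..<n}. \<not> ?c S}"
      then have S: "S \<subseteq> {..<n}" "card S = 0 \<or> card S \<ge> n" by auto
      have fin: "finite S" using S(1) finite_subset by blast
      show "S \<in> {{}, {..<n}}"
      proof (cases "card S = 0")
        case True then show ?thesis using fin by simp
      next
        case False then have "card S \<ge> card {..<n}" using S by simp
        then have "S = {..<n}" using S(1) by (simp add: card_seteq)
        then show ?thesis by simp
      qed
    next
      fix S assume "S \<in> {{}, {..<n}}" then show "S \<in> {S\<in>Pow {..<n}. \<not> ?c S}" by auto
    qed
    also have "sum f {{}, {..<n}} = (1 - p) ^ n + p ^ n"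
    proof -
      have "(0::nat) \<in> {..<n}" using n by simp
      then have ne: "({}::nat set) \<noteq> {..<n}" by blast
      show ?thesis using ne by (simp add: f_def)
    qed
    finally show ?thesis using split full_binom[where n=n and p=p] unfolding f_def D_def by simp
  qed
  finally show ?thesis using Dpos by simp
qed

lemma main_gen:
  assumes sd: "symd n P" and tot: "sum P (Pow {..<n}) = 1"
    and z0: "\<And>S. S \<subseteq> {..<n} \<Longrightarrow> card S = 0 \<Longrightarrow> P S = 0"
    and zn: "\<And>S. S \<subseteq> {..<n} \<Longrightarrow> card S = n \<Longrightarrow> P S = 0"
    and B0: "\<And>i. i < n \<Longrightarrow> B i 0 = 0"
  shows "expect n P (beta_naive n g a b B) - DTE n a b B = bias_formula n g P B"
proof -
  have "expect n P (beta_naive n g a b B) = expect n P (\<lambda>S. \<Sum>i<n. a i * (Zind S i / real (card S) - (1 - Zind S i) / (real n - real (card S)))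
     + b i * (Zind S i / real (card S))
     + (\<Sum>e\<in>{1..degree g n i}. B i e *
        ((if Zind S i = 1 \<and> exposure g n S i = e then 1 else 0) / (\<Sum>j<n. if Zind S j = 1 then 1 else 0)
       - (if Zind S i = 0 \<and> exposure g n S i = e then 1 else 0) / (\<Sum>j<n. if Zind S j = 0 then 1 else 0))))"
    unfolding expect_def by (rule sum.cong[OF refl]) (simp add: beta_pw B0)
  also have "\<dots> = (\<Sum>i<n. a i * (expect n P (\<lambda>S. Zind S i / real (card S)) - expect n P (\<lambda>S. (1 - Zind S i) / (real n - real (card S))))
     + b i * expect n P (\<lambda>S. Zind S i / real (card S))
     + (\<Sum>e\<in>{1..degree g n i}. B i e * (alpha_w n g P i 1 e - alpha_w n g P i 0 e)))"
    unfolding alpha_w_def by (simp only: expect_sum expect_add expect_diff expect_cmult)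
  also have "\<dots> = (\<Sum>i<n. b i / real n
     + (\<Sum>e\<in>{1..degree g n i}. B i e * (alpha_w n g P i 1 e - alpha_w n g P i 0 e)))"
    by (rule sum.cong[OF refl]) (simp add: ET[OF sd tot z0] EC[OF sd tot zn])
  also have "\<dots> = DTE n a b B + bias_formula n g P B"
    unfolding DTE_def bias_formula_def Ypot_def
    by (simp add: sum.distrib sum_divide_distrib)
  finally show ?thesis by simp
qed

theorem corollary1:
  fixes n nt :: nat and p :: real
    and g :: "nat \<Rightarrow> nat \<Rightarrow> bool"
    and a b :: "nat \<Rightarrow> real" and B :: "nat \<Rightarrow> nat \<Rightarrow> real"
  assumes sym: "\<And>i j. i < n \<Longrightarrow> j < n \<Longrightarrow> g i j = g j i"
    and irrefl: "\<And>i. i < n \<Longrightarrow> \<not> g i i"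
    and B0: "\<And>i. i < n \<Longrightarrow> B i 0 = 0"
    and n2: "2 \<le> n"
    and nt: "1 \<le> nt" "nt \<le> n - 1"
    and p: "0 < p" "p < 1"
  shows "expect n (crd_prob n nt) (beta_naive n g a b B) - DTE n a b B
           = bias_formula n g (crd_prob n nt) B
       \<and> expect n (rbd_prob n p) (beta_naive n g a b B) - DTE n a b B
           = bias_formula n g (rbd_prob n p) B"
proof
  show "expect n (crd_prob n nt) (beta_naive n g a b B) - DTE n a b B
           = bias_formula n g (crd_prob n nt) B"
    using symd_crd crd_tot[of nt n] nt n2 B0
    by (intro main_gen[where P="crd_prob n nt"]) (auto simp: crd_prob_def)
  show "expect n (rbd_prob n p) (beta_naive n g a b B) - DTE n a b B
           = bias_formula n g (rbd_prob n p) B"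
    using symd_rbd rbd_tot[OF p n2] B0
    by (intro main_gen[where P="rbd_prob n p"]) (auto simp: rbd_prob_def)
qed

end
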